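(* Let $n\geq1$ and $0\leq p\leq 1$. Then: (i) for $1<k<n$, $$\Pr_p(PCE_k)=\sum_{r=k}^n\binom{r}{k}(-1)^{r-k}\binom{n}{r}2^r\bigl(p^{2^n-2^{n-r}}-p^{2^n}\bigr),\quad \Pr_p(NCE_k)=\sum_{r=k}^n\binom{r}{k}(-1)^{r-k}\binom{n}{r}2^r\bigl((1-p)^{2^n-2^{n-r}}-(1-p)^{2^n}\bigr);$$ (ii) if $n>1$, $$\Pr_p(PCE_n)=2^n\bigl(p^{2^n-1}-p^{2^n}\bigr)+p^{2^n},\qquad \Pr_p(NCE_n)=2^n\bigl((1-p)^{2^n-1}-(1-p)^{2^n}\bigr)+(1-p)^{2^n};$$ (iii) if $1<n$, $$\Pr_p(PCE_1)=2n\bigl(p^{2^{n-1}}-p^{2^n}-p^{2^{n-1}}(1-p)^{2^{n-1}}\bigr)+\sum_{r=2}^n r(-1)^{r-1}\binom{n}{r}2^r\bigl(p^{2^n-2^{n-r}}-p^{2^n}\bigr),$$ $$\Pr_p(NCE_1)=2n\bigl((1-p)^{2^{n-1}}-(1-p)^{2^n}-p^{2^{n-1}}(1-p)^{2^{n-1}}\bigr)+\sum_{r=2}^n r(-1)^{r-1}\binom{n}{r}2^r\bigl((1-p)^{2^n-2^{n-r}}-(1-p)^{2^n}\bigr).$$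
   Context: Boolean functions on $n$ variables are maps $f:\{0,1\}^n\to\{0,1\}$, variables indexed by $[n]=\{0,\dots,n-1\}$. The bias-$p$ probability measure on Boolean functions is $\Pr_p(f)=p^{|f^{-1}\{1\}|}(1-p)^{|f^{-1}\{0\}|}$ (with $0^0=1$). $f$ is positively canalizing for variable $i$ if there is $s\in\{0,1\}$ with $f(x)=1$ for all $x$ with $x_i=s$; negatively canalizing for variable $i$ if there is $s\in\{0,1\}$ with $f(x)=0$ for all $x$ with $x_i=s$. $f$ is positively (resp. negatively) canalizing if it is so for some variable. $PCE_k$ is the set of Boolean functions that are positively but not negatively canalizing and are positively canalizing for exactly $k$ variables; $NCE_k$ is the set of Boolean functions that are negatively but not positively canalizing and are negatively canalizing for exactly $k$ variables. *)

theory Defs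
  imports Complex_Main
begin

text \<open>Inputs in {0,1}^n are bool lists of length n (variable i is the i-th entry);
 a Boolean function on n variables is a map on bool lists that is False outside the cube
 (extensional convention), so that these functions correspond bijectively to maps
 {0,1}^n -> {0,1}.\<close>

definition cube :: "nat \<Rightarrow> bool list set" where
  "cube n = {x. length x = n}"

definition boolfuns :: "nat \<Rightarrow> (bool list \<Rightarrow> bool) set" where
  "boolfuns n = {f. \<forall>x. x \<notin> cube n \<longrightarrow> f x = False}"

definition Prb :: "real \<Rightarrow> nat \<Rightarrow> (bool list \<Rightarrow> bool) set \<Rightarrow> real" where
  "Prb p n S = (\<Sum>f\<in>S. p ^ card {x\<in>cube n. f x} * (1 - p) ^ card {x\<in>cube n. \<not> f x})"

definition pos_canal_var :: "nat \<Rightarrow> (bool list \<Rightarrow> bool) \<Rightarrow> nat \<Rightarrow> bool" where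
  "pos_canal_var n f i = (\<exists>s. \<forall>x\<in>cube n. x ! i = s \<longrightarrow> f x)"

definition neg_canal_var :: "nat \<Rightarrow> (bool list \<Rightarrow> bool) \<Rightarrow> nat \<Rightarrow> bool" where
  "neg_canal_var n f i = (\<exists>s. \<forall>x\<in>cube n. x ! i = s \<longrightarrow> \<not> f x)"

definition pos_canal :: "nat \<Rightarrow> (bool list \<Rightarrow> bool) \<Rightarrow> bool" where
  "pos_canal n f = (\<exists>i<n. pos_canal_var n f i)"

definition neg_canal :: "nat \<Rightarrow> (bool list \<Rightarrow> bool) \<Rightarrow> bool" where
  "neg_canal n f = (\<exists>i<n. neg_canal_var n f i)"

definition PCE :: "nat \<Rightarrow> nat \<Rightarrow> (bool list \<Rightarrow> bool) set" where
  "PCE n k = {f \<in> boolfuns n. pos_canal n f \<and> \<not> neg_canal n f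
                 \<and> card {i. i < n \<and> pos_canal_var n f i} = k}"

definition NCE :: "nat \<Rightarrow> nat \<Rightarrow> (bool list \<Rightarrow> bool) set" where
  "NCE n k = {f \<in> boolfuns n. neg_canal n f \<and> \<not> pos_canal n f
                 \<and> card {i. i < n \<and> neg_canal_var n f i} = k}"

end

theory Submission
  imports Defs
begin

lemma sum_Pow_card:
  fixes g :: "nat \<Rightarrow> real"
  assumes "finite K"
  shows "(\<Sum>S\<in>Pow K. g (card S)) = (\<Sum>r\<le>card K. real (card K choose r) * g r)"
proof -
  have "(\<Sum>S\<in>Pow K. g (card S)) = (\<Sum>r\<le>card K. \<Sum>S\<in>{S. S \<in> Pow K \<and> card S = r}. g (card S))"
    by (rule sum.group[symmetric]) (use assms in \<open>auto intro: card_mono\<close>)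
  also have "\<dots> = (\<Sum>r\<le>card K. real (card K choose r) * g r)"
  proof (rule sum.cong[OF refl])
    fix r assume "r \<in> {..card K}"
    have "(\<Sum>S\<in>{S. S \<in> Pow K \<and> card S = r}. g (card S)) = (\<Sum>S\<in>{S. S \<subseteq> K \<and> card S = r}. g r)"
      by (rule sum.cong) auto
    also have "\<dots> = real (card K choose r) * g r"
      using n_subsets[OF assms, of r] by simp
    finally show "(\<Sum>S\<in>{S. S \<in> Pow K \<and> card S = r}. g (card S)) = real (card K choose r) * g r" .
  qed
  finally show ?thesis .
qed

lemma alt_choose:
  "(\<Sum>r\<le>m. real (m choose r) * (real (r choose k) * (-1) ^ (r - k))) = (if m = k then 1 else 0)"
proof (cases "k \<le> m")
  case False
  then show ?thesis by (auto intro!: sum.neutral)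
next
  case True
  have "(\<Sum>r\<le>m. real (m choose r) * (real (r choose k) * (-1) ^ (r - k)))
      = (\<Sum>r\<in>{k..m}. real (m choose r) * (real (r choose k) * (-1) ^ (r - k)))"
    by (rule sum.mono_neutral_right) auto
  also have "\<dots> = (\<Sum>r\<in>{k..m}. real (m choose k) * (real ((m - k) choose (r - k)) * (-1) ^ (r - k)))"
  proof (rule sum.cong[OF refl])
    fix r assume "r \<in> {k..m}"
    then have "(m choose r) * (r choose k) = (m choose k) * ((m - k) choose (r - k))"
      by (intro choose_mult) auto
    then have "real (m choose r) * real (r choose k) = real (m choose k) * real ((m - k) choose (r - k))"
      by (metis of_nat_mult)
    then show "real (m choose r) * (real (r choose k) * (-1) ^ (r - k)) = real (m choose k) * (real ((m - k) choose (r - k)) * (-1) ^ (r - k))"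
      by (metis mult.assoc)
  qed
  also have "\<dots> = real (m choose k) * (\<Sum>j\<le>m-k. real ((m - k) choose j) * (-1) ^ j)"
  proof -
    have "(\<Sum>r\<in>{k..m}. real ((m - k) choose (r - k)) * (-1) ^ (r - k)) = (\<Sum>j\<le>m-k. real ((m - k) choose j) * (-1) ^ j)"
    proof (rule sum.reindex_bij_witness[where i="\<lambda>j. j + k" and j="\<lambda>r. r - k"])
    qed (use True in auto)
    then show ?thesis by (simp add: sum_distrib_left[symmetric])
  qed
  also have "\<dots> = (if m = k then 1 else 0)"
  proof (cases "m = k")
    case True then show ?thesis by simp
  next
    case False
    then have "m - k > 0" using \<open>k \<le> m\<close> by simp
    from choose_alternating_sum[OF this, where 'a=real] show ?thesis using False
      by (simp add: mult.commute)
  qed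
  finally show ?thesis .
qed

lemma finite_cube: "finite (cube n)"
proof -
  have "cube n = {xs. set xs \<subseteq> (UNIV::bool set) \<and> length xs = n}" unfolding cube_def by auto
  then show ?thesis using finite_lists_length_eq[of "UNIV::bool set" n] by simp
qed

lemma cube_Suc: "cube (Suc n) = (\<lambda>(b,x). b # x) ` (UNIV \<times> cube n)"
  unfolding cube_def by (auto simp: length_Suc_conv image_iff)

lemma subcube_card:
  "S \<subseteq> {..<n} \<Longrightarrow> card {x\<in>cube n. \<forall>i\<in>S. x ! i = c i} = 2 ^ (n - card S)"
proof (induction n arbitrary: S c)
  case 0
  then show ?case by (simp add: cube_def)
next
  case (Suc n)
  define S' where "S' = {i. Suc i \<in> S}"
  have S': "S' \<subseteq> {..<n}" using Suc.prems unfolding S'_def by auto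
  have IH: "card {x\<in>cube n. \<forall>i\<in>S'. x ! i = c (Suc i)} = 2 ^ (n - card S')"
    using Suc.IH[OF S'] .
  let ?B = "{x\<in>cube n. \<forall>i\<in>S'. x ! i = c (Suc i)}"
  have fin: "finite ?B" using finite_cube by simp
  have eq: "{x\<in>cube (Suc n). \<forall>i\<in>S. x ! i = c i} = (\<lambda>(b,x). b # x) ` ({b. 0 \<in> S \<longrightarrow> b = c 0} \<times> ?B)"
  proof (intro set_eqI iffI)
    fix x assume "x \<in> {x\<in>cube (Suc n). \<forall>i\<in>S. x ! i = c i}"
    then have x: "x \<in> cube (Suc n)" "\<forall>i\<in>S. x ! i = c i" by auto
    then obtain b y where "x = b # y" "y \<in> cube n" unfolding cube_def by (cases x) auto
    have c1: "0 \<in> S \<longrightarrow> b = c 0" using x(2) \<open>x = b # y\<close> by force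
    have c2: "\<forall>i\<in>S'. y ! i = c (Suc i)"
    proof
      fix i assume "i \<in> S'"
      then have "Suc i \<in> S" by (simp add: S'_def)
      with x(2) have "x ! Suc i = c (Suc i)" by blast
      then show "y ! i = c (Suc i)" using \<open>x = b # y\<close> by simp
    qed
    have "(b, y) \<in> {b. 0 \<in> S \<longrightarrow> b = c 0} \<times> ?B"
      using c1 c2 \<open>y \<in> cube n\<close> by blast
    then show "x \<in> (\<lambda>(b,x). b # x) ` ({b. 0 \<in> S \<longrightarrow> b = c 0} \<times> ?B)"
      using \<open>x = b # y\<close> by (metis (no_types, lifting) case_prod_conv image_eqI)
  next
    fix x assume "x \<in> (\<lambda>(b,x). b # x) ` ({b. 0 \<in> S \<longrightarrow> b = c 0} \<times> ?B)"
    then obtain b y where xby: "x = b # y" and b: "0 \<in> S \<longrightarrow> b = c 0" and y: "y \<in> ?B" by auto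
    have "x \<in> cube (Suc n)" using y xby unfolding cube_def by simp
    moreover have "\<forall>i\<in>S. x ! i = c i"
    proof
    fix i assume "i \<in> S"
    show "x ! i = c i"
    proof (cases i)
      case 0 then show ?thesis using b \<open>i \<in> S\<close> xby by simp
    next
      case (Suc j)
      then have "j \<in> S'" using \<open>i \<in> S\<close> by (simp add: S'_def)
      then show ?thesis using y Suc xby by simp
    qed
    qed
    ultimately show "x \<in> {x\<in>cube (Suc n). \<forall>i\<in>S. x ! i = c i}" by simp
  qed
  have inj: "inj_on (\<lambda>(b,x). b # x) ({b. 0 \<in> S \<longrightarrow> b = c 0} \<times> ?B)"
    by (auto simp: inj_on_def)
  have cardS: "card S = (if 0 \<in> S then Suc (card S') else card S')"
  proof -
    have fS: "finite S" using Suc.prems finite_subset by blast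
    have "S - {0} = Suc ` S'"
    proof (intro set_eqI iffI)
      fix i assume "i \<in> S - {0}"
      then obtain j where "i = Suc j" "Suc j \<in> S" by (metis DiffE insertI1 not0_implies_Suc)
      then show "i \<in> Suc ` S'" by (simp add: S'_def)
    next
      fix i assume "i \<in> Suc ` S'"
      then show "i \<in> S - {0}" by (auto simp: S'_def)
    qed
    moreover have "card (Suc ` S') = card S'" by (simp add: card_image)
    ultimately have SS: "card (S - {0}) = card S'" by simp
    show ?thesis
    proof (cases "0 \<in> S")
      case True then show ?thesis using fS SS by (metis card_Suc_Diff1)
    next
      case False then show ?thesis using SS by (metis Diff_empty Diff_insert0)
    qed
  qed
  have cS': "card S' \<le> n" using S' by (metis card_lessThan card_mono finite_lessThan)
  show ?case
  proof (cases "0 \<in> S")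
    case True
    then have "{b. 0 \<in> S \<longrightarrow> b = c 0} = {c 0}" by auto
    then show ?thesis using eq inj IH cardS True
      by (simp add: card_image card_cartesian_product)
  next
    case False
    then have "{b. 0 \<in> S \<longrightarrow> b = c 0} = UNIV" by auto
    moreover have "2 ^ (Suc n - card S') = (2::nat) * 2 ^ (n - card S')" using cS'
      by (simp add: Suc_diff_le)
    ultimately show ?thesis using eq inj IH cardS False
      by (simp add: card_image card_cartesian_product)
  qed
qed

lemma card_cube: "card (cube n) = 2 ^ n"
  using subcube_card[of "{}" n] by simp


lemma total_weight:
  fixes p :: real
  assumes "finite V"
  shows "(\<Sum>B\<in>Pow V. p ^ card B * (1 - p) ^ (card V - card B)) = 1"
proof -
  have "(\<Sum>B\<in>Pow V. p ^ card B * (1 - p) ^ (card V - card B))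
      = (\<Sum>r\<le>card V. real (card V choose r) * (p ^ r * (1 - p) ^ (card V - r)))"
    using sum_Pow_card[OF assms, of "\<lambda>r. p ^ r * (1 - p) ^ (card V - r)"] by simp
  also have "\<dots> = (p + (1 - p)) ^ card V"
    using binomial_ring[of p "1 - p" "card V"] by (simp only: mult.assoc)
  finally show ?thesis by simp
qed

lemma up_weight:
  fixes p :: real
  assumes "finite U" "T \<subseteq> U"
  shows "(\<Sum>A\<in>{A. T \<subseteq> A \<and> A \<subseteq> U}. p ^ card A * (1 - p) ^ card (U - A)) = p ^ card T"
proof -
  have fT: "finite T" using assms finite_subset by blast
  have "(\<Sum>A\<in>{A. T \<subseteq> A \<and> A \<subseteq> U}. p ^ card A * (1 - p) ^ card (U - A))
      = (\<Sum>B\<in>Pow (U - T). p ^ card (T \<union> B) * (1 - p) ^ card (U - (T \<union> B)))"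
    by (rule sum.reindex_bij_witness[where j="\<lambda>A. A - T" and i="\<lambda>B. T \<union> B"])
      (use assms in \<open>auto simp: Un_Diff_cancel Un_absorb1\<close>)
  also have "\<dots> = (\<Sum>B\<in>Pow (U - T). p ^ card T * (p ^ card B * (1 - p) ^ (card (U - T) - card B)))"
  proof (rule sum.cong[OF refl])
    fix B assume B: "B \<in> Pow (U - T)"
    then have fB: "finite B" using assms finite_subset by blast
    have c1: "card (T \<union> B) = card T + card B" using B fT fB by (subst card_Un_disjoint) auto
    have "U - (T \<union> B) = (U - T) - B" by auto
    then have c2: "card (U - (T \<union> B)) = card (U - T) - card B" using B fB
      by (simp add: card_Diff_subset)
    show "p ^ card (T \<union> B) * (1 - p) ^ card (U - (T \<union> B)) = p ^ card T * (p ^ card B * (1 - p) ^ (card (U - T) - card B))"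
      by (simp add: c1 c2 power_add)
  qed
  also have "\<dots> = p ^ card T"
    unfolding sum_distrib_left[symmetric] using total_weight[of "U - T" p] assms by simp
  finally show ?thesis .
qed

definition ones :: "nat \<Rightarrow> (bool list \<Rightarrow> bool) \<Rightarrow> bool list set" where
  "ones n f = {x\<in>cube n. f x}"

lemma boolfuns_ones: "f \<in> boolfuns n \<Longrightarrow> f = (\<lambda>x. x \<in> ones n f)"
  unfolding boolfuns_def ones_def by auto

lemma inj_ones: "inj_on (ones n) (boolfuns n)"
proof (rule inj_onI)
  fix f g assume f: "f \<in> boolfuns n" and g: "g \<in> boolfuns n" and eq: "ones n f = ones n g"
  have "f = (\<lambda>x. x \<in> ones n f)" by (rule boolfuns_ones) fact
  also have "\<dots> = (\<lambda>x. x \<in> ones n g)" using eq by simp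
  also have "\<dots> = g" by (rule boolfuns_ones[symmetric]) fact
  finally show "f = g" .
qed

lemma boolfuns_image: "boolfuns n = (\<lambda>A x. x \<in> A) ` Pow (cube n)"
proof (intro set_eqI iffI)
  fix f assume "f \<in> boolfuns n"
  then have "f = (\<lambda>A x. x \<in> A) (ones n f)" using boolfuns_ones[of f n] by simp
  moreover have "ones n f \<in> Pow (cube n)" by (auto simp: ones_def)
  ultimately show "f \<in> (\<lambda>A x. x \<in> A) ` Pow (cube n)" by (rule image_eqI)
next
  fix f assume "f \<in> (\<lambda>A x. x \<in> A) ` Pow (cube n)"
  then obtain A where A: "A \<subseteq> cube n" "f = (\<lambda>x. x \<in> A)" by blast
  then show "f \<in> boolfuns n" unfolding boolfuns_def by blast
qed

lemma finite_boolfuns: "finite (boolfuns n)"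
  using boolfuns_image finite_cube by simp

lemma ones_image:
  "ones n ` {f\<in>boolfuns n. P f} = {A. A \<subseteq> cube n \<and> P (\<lambda>x. x \<in> A)}"
proof (intro set_eqI iffI)
  fix A assume "A \<in> ones n ` {f\<in>boolfuns n. P f}"
  then obtain f where f: "f \<in> boolfuns n" "P f" "A = ones n f" by auto
  have "A \<subseteq> cube n" by (simp add: f ones_def)
  moreover have "P (\<lambda>x. x \<in> A)"
  proof -
    have eqf: "(\<lambda>x. x \<in> ones n f) = f" using boolfuns_ones[OF f(1)] by (rule sym)
    show ?thesis using f(2) unfolding f(3) eqf .
  qed
  ultimately show "A \<in> {A. A \<subseteq> cube n \<and> P (\<lambda>x. x \<in> A)}" by simp
next
  fix A assume A: "A \<in> {A. A \<subseteq> cube n \<and> P (\<lambda>x. x \<in> A)}"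
  have "(\<lambda>x. x \<in> A) \<in> boolfuns n" using A by (auto simp: boolfuns_def)
  moreover have "ones n (\<lambda>x. x \<in> A) = A" using A by (auto simp: ones_def)
  moreover have "P (\<lambda>x. x \<in> A)" using A by simp
  ultimately have "ones n (\<lambda>x. x \<in> A) \<in> ones n ` {f\<in>boolfuns n. P f}" by (intro imageI) simp
  then show "A \<in> ones n ` {f\<in>boolfuns n. P f}" using \<open>ones n (\<lambda>x. x \<in> A) = A\<close> by simp
qed

lemma Prb_sets:
  assumes "F \<subseteq> boolfuns n"
  shows "Prb p n F = (\<Sum>A\<in>ones n ` F. p ^ card A * (1 - p) ^ card (cube n - A))"
proof -
  have "inj_on (ones n) F" using inj_ones assms inj_on_subset by blast
  then have "(\<Sum>A\<in>ones n ` F. p ^ card A * (1 - p) ^ card (cube n - A))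
     = (\<Sum>f\<in>F. p ^ card (ones n f) * (1 - p) ^ card (cube n - ones n f))"
    by (rule sum.reindex_cong[OF _ refl]) simp
  also have "\<dots> = Prb p n F"
  proof -
    have e: "\<And>f. cube n - {x\<in>cube n. f x} = {x\<in>cube n. \<not> f x}" by auto
    show ?thesis unfolding Prb_def ones_def e ..
  qed
  finally show ?thesis by simp
qed


lemma canal_sets:
  fixes p :: real
  assumes S: "S \<subseteq> {..<n}"
  shows "(\<Sum>A\<in>{A. A \<subseteq> cube n \<and> (\<forall>i\<in>S. \<exists>s. \<forall>x\<in>cube n. x ! i = s \<longrightarrow> x \<in> A)}.
            p ^ card A * (1 - p) ^ card (cube n - A))
         = p ^ (2 ^ n) + 2 ^ card S * (p ^ (2 ^ n - 2 ^ (n - card S)) - p ^ (2 ^ n))"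
proof -
  define h where "h A = p ^ card A * (1 - p) ^ card (cube n - A)" for A
  define G where "G = {A. A \<subseteq> cube n \<and> (\<forall>i\<in>S. \<exists>s. \<forall>x\<in>cube n. x ! i = s \<longrightarrow> x \<in> A)}"
  define C where "C T = {x\<in>cube n. \<forall>i\<in>S. x ! i = (i \<in> T)}" for T
  define GT where "GT T = {A. cube n - C T \<subseteq> A \<and> A \<subseteq> cube n}" for T
  have fS: "finite S" using S finite_subset by blast
  have fc: "finite (cube n)" by (rule finite_cube)
  have "G \<subseteq> Pow (cube n)" unfolding G_def by auto
  then have finG: "finite G" using fc by (simp add: finite_subset)
  have cubeG: "cube n \<in> G" unfolding G_def by auto
  have split: "G - {cube n} = (\<Union>T\<in>Pow S. GT T - {cube n})"
  proof (intro set_eqI iffI)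
    fix A assume A: "A \<in> G - {cube n}"
    then have Asub: "A \<subseteq> cube n" and can: "\<forall>i\<in>S. \<exists>s. \<forall>x\<in>cube n. x ! i = s \<longrightarrow> x \<in> A"
      unfolding G_def by auto
    from A Asub obtain z where z: "z \<in> cube n" "z \<notin> A" by blast
    define T where "T = {i\<in>S. z ! i}"
    have "cube n - C T \<subseteq> A"
    proof
      fix x assume x: "x \<in> cube n - C T"
      then obtain i where i: "i \<in> S" "x ! i \<noteq> (i \<in> T)" unfolding C_def by auto
      then have xz: "x ! i \<noteq> z ! i" unfolding T_def by auto
      from can i(1) obtain s where s: "\<forall>y\<in>cube n. y ! i = s \<longrightarrow> y \<in> A" by blast
      then have "z ! i \<noteq> s" using z by blast
      then have "x ! i = s" using xz by blast
      then show "x \<in> A" using s x by blast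
    qed
    then have "A \<in> GT T - {cube n}" using A Asub unfolding GT_def by auto
    moreover have "T \<in> Pow S" unfolding T_def by auto
    ultimately show "A \<in> (\<Union>T\<in>Pow S. GT T - {cube n})" by blast
  next
    fix A assume "A \<in> (\<Union>T\<in>Pow S. GT T - {cube n})"
    then obtain T where T: "T \<subseteq> S" and A: "cube n - C T \<subseteq> A" "A \<subseteq> cube n" "A \<noteq> cube n"
      unfolding GT_def by auto
    have "\<forall>i\<in>S. \<exists>s. \<forall>x\<in>cube n. x ! i = s \<longrightarrow> x \<in> A"
    proof
      fix i assume i: "i \<in> S"
      have "\<forall>x\<in>cube n. x ! i = (i \<notin> T) \<longrightarrow> x \<in> A"
      proof (intro ballI impI)
        fix x assume "x \<in> cube n" "x ! i = (i \<notin> T)"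
        then have "x \<in> cube n - C T" using i unfolding C_def by auto
        then show "x \<in> A" using A by blast
      qed
      then show "\<exists>s. \<forall>x\<in>cube n. x ! i = s \<longrightarrow> x \<in> A" by blast
    qed
    then show "A \<in> G - {cube n}" using A unfolding G_def by auto
  qed
  have disj: "\<forall>T\<in>Pow S. \<forall>T'\<in>Pow S. T \<noteq> T' \<longrightarrow> (GT T - {cube n}) \<inter> (GT T' - {cube n}) = {}"
  proof (intro ballI impI)
    fix T T' assume T: "T \<in> Pow S" and T': "T' \<in> Pow S" and ne: "T \<noteq> T'"
    show "(GT T - {cube n}) \<inter> (GT T' - {cube n}) = {}"
    proof (rule ccontr)
      assume "(GT T - {cube n}) \<inter> (GT T' - {cube n}) \<noteq> {}"
      then obtain A where A: "cube n - C T \<subseteq> A" "cube n - C T' \<subseteq> A" "A \<subseteq> cube n" "A \<noteq> cube n"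
        unfolding GT_def by blast
      then obtain z where z: "z \<in> cube n" "z \<notin> A" by blast
      then have "z \<in> C T" "z \<in> C T'" using A by blast+
      then have "\<forall>i\<in>S. (i \<in> T) = (i \<in> T')" unfolding C_def by auto
      then have "T = T'" using T T' by blast
      then show False using ne by simp
    qed
  qed
  have finGT: "\<forall>T\<in>Pow S. finite (GT T - {cube n})"
    using fc unfolding GT_def by auto
  have hcube: "h (cube n) = p ^ (2 ^ n)" unfolding h_def by (simp add: card_cube)
  have GTsum: "sum h (GT T - {cube n}) = p ^ (2 ^ n - 2 ^ (n - card S)) - p ^ (2 ^ n)" if T: "T \<in> Pow S" for T
  proof -
    have CT: "C T \<subseteq> cube n" unfolding C_def by auto
    have cardC: "card (C T) = 2 ^ (n - card S)"
      unfolding C_def using subcube_card[OF S, of "\<lambda>i. i \<in> T"] by simp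
    have "sum h (GT T) = p ^ card (cube n - C T)"
      unfolding h_def GT_def by (rule up_weight[OF fc]) auto
    also have "card (cube n - C T) = 2 ^ n - 2 ^ (n - card S)"
      using CT fc cardC by (simp add: card_Diff_subset finite_subset card_cube)
    finally have "sum h (GT T) = p ^ (2 ^ n - 2 ^ (n - card S))" .
    moreover have "cube n \<in> GT T" unfolding GT_def using CT by auto
    moreover have "finite (GT T)" using fc unfolding GT_def by auto
    ultimately show ?thesis by (simp add: sum_diff1 hcube)
  qed
  have "sum h G = h (cube n) + sum h (G - {cube n})"
    by (rule sum.remove[OF finG cubeG])
  also have "sum h (G - {cube n}) = (\<Sum>T\<in>Pow S. sum h (GT T - {cube n}))"
    unfolding split by (rule sum.UNION_disjoint) (use fS finGT disj in auto)
  also have "\<dots> = (\<Sum>T\<in>Pow S. p ^ (2 ^ n - 2 ^ (n - card S)) - p ^ (2 ^ n))"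
    by (rule sum.cong[OF refl]) (rule GTsum)
  also have "\<dots> = 2 ^ card S * (p ^ (2 ^ n - 2 ^ (n - card S)) - p ^ (2 ^ n))"
    using fS by (simp add: card_Pow)
  finally show ?thesis unfolding h_def G_def hcube[unfolded h_def] .
qed


definition Kset :: "nat \<Rightarrow> (bool list \<Rightarrow> bool) \<Rightarrow> nat set" where
  "Kset n f = {i. i < n \<and> pos_canal_var n f i}"

lemma Prb_subsets:
  fixes p :: real
  assumes S: "S \<subseteq> {..<n}"
  shows "Prb p n {f\<in>boolfuns n. S \<subseteq> Kset n f}
          = p ^ (2 ^ n) + 2 ^ card S * (p ^ (2 ^ n - 2 ^ (n - card S)) - p ^ (2 ^ n))"
proof -
  have "{f\<in>boolfuns n. S \<subseteq> Kset n f} = {f\<in>boolfuns n. \<forall>i\<in>S. pos_canal_var n f i}"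
    using S unfolding Kset_def by auto
  then have "Prb p n {f\<in>boolfuns n. S \<subseteq> Kset n f}
     = (\<Sum>A\<in>ones n ` {f\<in>boolfuns n. \<forall>i\<in>S. pos_canal_var n f i}. p ^ card A * (1 - p) ^ card (cube n - A))"
    by (simp add: Prb_sets)
  also have "ones n ` {f\<in>boolfuns n. \<forall>i\<in>S. pos_canal_var n f i}
     = {A. A \<subseteq> cube n \<and> (\<forall>i\<in>S. \<exists>s. \<forall>x\<in>cube n. x ! i = s \<longrightarrow> x \<in> A)}"
    unfolding ones_image pos_canal_var_def ..
  finally show ?thesis using canal_sets[OF S, of p] by simp
qed

lemma exact_count:
  fixes p :: real
  shows "Prb p n {f\<in>boolfuns n. card (Kset n f) = k}
     = (\<Sum>S\<in>Pow {..<n}. real (card S choose k) * (-1) ^ (card S - k) * Prb p n {f\<in>boolfuns n. S \<subseteq> Kset n f})"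
proof -
  define w where "w f = p ^ card {x\<in>cube n. f x} * (1 - p) ^ card {x\<in>cube n. \<not> f x}" for f
  define c where "c r = real (r choose k) * (-1) ^ (r - k)" for r
  have fb: "finite (boolfuns n)" by (rule finite_boolfuns)
  have Kfin: "Kset n f \<subseteq> {..<n}" for f unfolding Kset_def by auto
  have ind: "(if card (Kset n f) = k then 1 else 0) = (\<Sum>S\<in>Pow {..<n}. if S \<subseteq> Kset n f then c (card S) else 0)" for f
  proof -
    have fK: "finite (Kset n f)" using Kfin finite_subset by blast
    have "(\<Sum>S\<in>Pow (Kset n f). c (card S)) = (\<Sum>r\<le>card (Kset n f). real (card (Kset n f) choose r) * c r)"
      by (rule sum_Pow_card[OF fK])
    also have "\<dots> = (if card (Kset n f) = k then 1 else 0)"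
      unfolding c_def by (rule alt_choose)
    finally have 1: "(\<Sum>S\<in>Pow (Kset n f). c (card S)) = (if card (Kset n f) = k then 1 else 0)" .
    have "(\<Sum>S\<in>Pow {..<n}. if S \<subseteq> Kset n f then c (card S) else 0) = (\<Sum>S\<in>{S\<in>Pow {..<n}. S \<subseteq> Kset n f}. c (card S))"
      by (rule sum.inter_filter[symmetric]) simp
    also have "{S\<in>Pow {..<n}. S \<subseteq> Kset n f} = Pow (Kset n f)" using Kfin by auto
    finally show ?thesis using 1 by simp
  qed
  have "Prb p n {f\<in>boolfuns n. card (Kset n f) = k} = (\<Sum>f\<in>boolfuns n. if card (Kset n f) = k then w f else 0)"
    unfolding Prb_def w_def by (rule sum.inter_filter[OF fb])
  also have "\<dots> = (\<Sum>f\<in>boolfuns n. \<Sum>S\<in>Pow {..<n}. if S \<subseteq> Kset n f then c (card S) * w f else 0)"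
  proof (rule sum.cong[OF refl])
    fix f
    have "(if card (Kset n f) = k then w f else 0) = (if card (Kset n f) = k then 1 else 0) * w f" by simp
    also have "\<dots> = (\<Sum>S\<in>Pow {..<n}. if S \<subseteq> Kset n f then c (card S) else 0) * w f" by (simp only: ind)
    also have "\<dots> = (\<Sum>S\<in>Pow {..<n}. if S \<subseteq> Kset n f then c (card S) * w f else 0)"
      unfolding sum_distrib_right by (rule sum.cong) auto
    finally show "(if card (Kset n f) = k then w f else 0) = (\<Sum>S\<in>Pow {..<n}. if S \<subseteq> Kset n f then c (card S) * w f else 0)" .
  qed
  also have "\<dots> = (\<Sum>S\<in>Pow {..<n}. \<Sum>f\<in>boolfuns n. if S \<subseteq> Kset n f then c (card S) * w f else 0)"
    by (rule sum.swap)
  also have "\<dots> = (\<Sum>S\<in>Pow {..<n}. c (card S) * Prb p n {f\<in>boolfuns n. S \<subseteq> Kset n f})"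
  proof (rule sum.cong[OF refl])
    fix S
    have "(\<Sum>f\<in>boolfuns n. if S \<subseteq> Kset n f then c (card S) * w f else 0)
        = (\<Sum>f\<in>{f\<in>boolfuns n. S \<subseteq> Kset n f}. c (card S) * w f)"
      by (rule sum.inter_filter[OF fb, symmetric])
    also have "\<dots> = c (card S) * Prb p n {f\<in>boolfuns n. S \<subseteq> Kset n f}"
      unfolding Prb_def w_def by (simp add: sum_distrib_left)
    finally show "(\<Sum>f\<in>boolfuns n. if S \<subseteq> Kset n f then c (card S) * w f else 0) = c (card S) * Prb p n {f\<in>boolfuns n. S \<subseteq> Kset n f}" .
  qed
  finally show ?thesis unfolding c_def .
qed

lemma main_count:
  fixes p :: real
  shows "Prb p n {f\<in>boolfuns n. card (Kset n f) = k}
     = (\<Sum>r=k..n. real (r choose k) * (-1) ^ (r - k) * real (n choose r) * 2 ^ r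
                             * (p ^ (2 ^ n - 2 ^ (n - r)) - p ^ (2 ^ n)))
       + (if n = k then p ^ (2 ^ n) else 0)"
proof -
  define c where "c r = real (r choose k) * (-1) ^ (r - k)" for r
  define D where "D r = (p ^ (2 ^ n - 2 ^ (n - r)) - p ^ (2 ^ n))" for r
  have "Prb p n {f\<in>boolfuns n. card (Kset n f) = k}
     = (\<Sum>S\<in>Pow {..<n}. c (card S) * (p ^ (2 ^ n) + 2 ^ card S * D (card S)))"
    unfolding exact_count c_def D_def
    by (rule sum.cong[OF refl]) (simp add: Prb_subsets)
  also have "\<dots> = (\<Sum>r\<le>n. real (n choose r) * (c r * (p ^ (2 ^ n) + 2 ^ r * D r)))"
    using sum_Pow_card[of "{..<n}" "\<lambda>r. c r * (p ^ (2 ^ n) + 2 ^ r * D r)"] by simp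
  also have "\<dots> = p ^ (2 ^ n) * (\<Sum>r\<le>n. real (n choose r) * c r) + (\<Sum>r\<le>n. real (n choose r) * c r * 2 ^ r * D r)"
    by (simp add: sum.distrib sum_distrib_left algebra_simps)
  also have "(\<Sum>r\<le>n. real (n choose r) * c r) = (if n = k then 1 else 0)"
    unfolding c_def using alt_choose[of n k] by (simp add: mult.assoc)
  also have "(\<Sum>r\<le>n. real (n choose r) * c r * 2 ^ r * D r) = (\<Sum>r=k..n. real (n choose r) * c r * 2 ^ r * D r)"
    by (rule sum.mono_neutral_right) (auto simp: c_def)
  finally show ?thesis unfolding c_def D_def by (simp add: algebra_simps)
qed



definition lit :: "nat \<Rightarrow> nat \<Rightarrow> bool \<Rightarrow> bool list \<Rightarrow> bool" where
  "lit n i s = (\<lambda>x. x \<in> cube n \<and> x ! i = s)"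

lemma upd_cube: "(replicate n a)[j := t] \<in> cube n"
  unfolding cube_def by simp

lemma L_char:
  assumes f: "f \<in> boolfuns n" and pc: "pos_canal n f" and nc: "neg_canal n f"
  shows "\<exists>i<n. \<exists>s. f = lit n i s"
proof -
  from pc obtain i s where i: "i < n" and s: "\<forall>x\<in>cube n. x ! i = s \<longrightarrow> f x"
    unfolding pos_canal_def pos_canal_var_def by blast
  from nc obtain j t where j: "j < n" and t: "\<forall>x\<in>cube n. x ! j = t \<longrightarrow> \<not> f x"
    unfolding neg_canal_def neg_canal_var_def by blast
  have ij: "i = j"
  proof (rule ccontr)
    assume "i \<noteq> j"
    define x where "x = (replicate n s)[j := t]"
    have "x \<in> cube n" unfolding x_def by (rule upd_cube)
    moreover have "x ! i = s" "x ! j = t" unfolding x_def using i j \<open>i \<noteq> j\<close> by auto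
    ultimately show False using s t by blast
  qed
  have st: "t = (\<not> s)"
  proof (rule ccontr)
    assume "t \<noteq> (\<not> s)"
    then have "t = s" by blast
    define x where "x = replicate n s"
    have "x \<in> cube n" unfolding x_def cube_def by simp
    moreover have "x ! i = s" unfolding x_def using i by simp
    ultimately show False using s t ij \<open>t = s\<close> by blast
  qed
  have "f = lit n i s"
  proof
    fix x
    show "f x = lit n i s x"
    proof (cases "x \<in> cube n")
      case True
      then show ?thesis using s t ij st unfolding lit_def by (cases "x ! i = s") auto
    next
      case False
      then show ?thesis using f unfolding lit_def boolfuns_def by auto
    qed
  qed
  then show ?thesis using i by blast
qed

lemma lit_props:
  assumes i: "i < n"
  shows "lit n i s \<in> boolfuns n" "Kset n (lit n i s) = {i}" "pos_canal n (lit n i s)" "neg_canal n (lit n i s)"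
proof -
  show "lit n i s \<in> boolfuns n" unfolding lit_def boolfuns_def by auto
  have pi: "pos_canal_var n (lit n i s) i" unfolding pos_canal_var_def lit_def by auto
  have "neg_canal_var n (lit n i s) i" unfolding neg_canal_var_def lit_def
    by (rule exI[of _ "\<not> s"]) auto
  then show "neg_canal n (lit n i s)" unfolding neg_canal_def using i by blast
  show "pos_canal n (lit n i s)" unfolding pos_canal_def using i pi by blast
  have "\<not> pos_canal_var n (lit n i s) j" if j: "j < n" "j \<noteq> i" for j
  proof
    assume "pos_canal_var n (lit n i s) j"
    then obtain t where t: "\<forall>x\<in>cube n. x ! j = t \<longrightarrow> lit n i s x" unfolding pos_canal_var_def by blast
    define x where "x = (replicate n (\<not> s))[j := t]"
    have "x \<in> cube n" unfolding x_def by (rule upd_cube)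
    moreover have "x ! j = t" "x ! i = (\<not> s)" unfolding x_def using i j by auto
    ultimately show False using t unfolding lit_def by auto
  qed
  then show "Kset n (lit n i s) = {i}" unfolding Kset_def using i pi by auto
qed

lemma lit_inj:
  assumes "i < n" "j < n" "lit n i s = lit n j t"
  shows "i = j \<and> s = t"
proof -
  have "{i} = {j}" using lit_props(2)[OF assms(1), of s] lit_props(2)[OF assms(2), of t] assms(3) by simp
  then have ij: "i = j" by simp
  have "replicate n s \<in> cube n" unfolding cube_def by simp
  then have "lit n i s (replicate n s)" unfolding lit_def using assms(1) by simp
  then have "lit n j t (replicate n s)" using assms(3) by simp
  then have "s = t" unfolding lit_def using assms(2) by simp
  with ij show ?thesis by simp
qed

definition Lset :: "nat \<Rightarrow> (bool list \<Rightarrow> bool) set" where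
  "Lset n = {f\<in>boolfuns n. pos_canal n f \<and> neg_canal n f}"

lemma Lset_image: "Lset n = (\<lambda>(i, s). lit n i s) ` ({..<n} \<times> UNIV)"
proof (intro set_eqI iffI)
  fix f assume "f \<in> Lset n"
  then have f: "f \<in> boolfuns n" "pos_canal n f" "neg_canal n f" unfolding Lset_def by auto
  obtain i s where "i < n" "f = lit n i s" using L_char[OF f] by blast
  then show "f \<in> (\<lambda>(i, s). lit n i s) ` ({..<n} \<times> UNIV)"
    by (intro image_eqI[where x="(i, s)"]) simp_all
next
  fix f assume "f \<in> (\<lambda>(i, s). lit n i s) ` ({..<n} \<times> UNIV)"
  then obtain a where a: "a \<in> {..<n} \<times> UNIV" "f = (\<lambda>(i, s). lit n i s) a" by (rule imageE)
  obtain i s where ai: "a = (i, s)" by (cases a)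
  have hi: "i < n" "f = lit n i s" using a ai by auto
  show "f \<in> Lset n" unfolding Lset_def hi(2) using lit_props[OF hi(1)] by simp
qed

lemma Prb_Lset:
  fixes p :: real
  assumes "n \<ge> 1"
  shows "Prb p n (Lset n) = 2 * real n * (p ^ (2 ^ (n - 1)) * (1 - p) ^ (2 ^ (n - 1)))"
proof -
  have inj: "inj_on (\<lambda>(i, s). lit n i s) ({..<n} \<times> UNIV)"
  proof (rule inj_onI)
    fix a b assume a: "a \<in> {..<n} \<times> (UNIV::bool set)" and b: "b \<in> {..<n} \<times> (UNIV::bool set)"
      and e: "(\<lambda>(i, s). lit n i s) a = (\<lambda>(i, s). lit n i s) b"
    obtain i s where ia: "a = (i, s)" by (cases a)
    obtain j t where jb: "b = (j, t)" by (cases b)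
    have "i < n" "j < n" using a b ia jb by auto
    moreover have "lit n i s = lit n j t" using e ia jb by simp
    ultimately have "i = j \<and> s = t" by (rule lit_inj)
    then show "a = b" using ia jb by simp
  qed
  have w: "p ^ card {x\<in>cube n. lit n i s x} * (1 - p) ^ card {x\<in>cube n. \<not> lit n i s x}
        = p ^ (2 ^ (n - 1)) * (1 - p) ^ (2 ^ (n - 1))" if i: "i < n" for i s
  proof -
    have "{x\<in>cube n. lit n i s x} = {x\<in>cube n. \<forall>j\<in>{i}. x ! j = (\<lambda>_. s) j}" unfolding lit_def by auto
    then have c1: "card {x\<in>cube n. lit n i s x} = 2 ^ (n - 1)" using subcube_card[of "{i}" n "\<lambda>_. s"] i by simp
    have "{x\<in>cube n. \<not> lit n i s x} = {x\<in>cube n. \<forall>j\<in>{i}. x ! j = (\<lambda>_. \<not> s) j}" unfolding lit_def by auto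
    then have c2: "card {x\<in>cube n. \<not> lit n i s x} = 2 ^ (n - 1)" using subcube_card[of "{i}" n "\<lambda>_. \<not> s"] i by simp
    show ?thesis using c1 c2 by simp
  qed
  have "Prb p n (Lset n) = (\<Sum>(i, s)\<in>{..<n} \<times> UNIV. p ^ card {x\<in>cube n. lit n i s x} * (1 - p) ^ card {x\<in>cube n. \<not> lit n i s x})"
    unfolding Prb_def Lset_image sum.reindex[OF inj] by (simp add: case_prod_unfold)
  also have "\<dots> = (\<Sum>(i, s)\<in>{..<n} \<times> (UNIV::bool set). p ^ (2 ^ (n - 1)) * (1 - p) ^ (2 ^ (n - 1)))"
    by (rule sum.cong[OF refl]) (use w in auto)
  also have "\<dots> = 2 * real n * (p ^ (2 ^ (n - 1)) * (1 - p) ^ (2 ^ (n - 1)))"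
    by (simp add: card_cartesian_product)
  finally show ?thesis .
qed

lemma card_pos: "card (Kset n f) \<ge> 1 \<Longrightarrow> pos_canal n f"
proof -
  assume "card (Kset n f) \<ge> 1"
  then have "Kset n f \<noteq> {}" by auto
  then obtain i where "i \<in> Kset n f" by blast
  then show "pos_canal n f" unfolding Kset_def pos_canal_def by blast
qed

lemma PCE_eq: "k \<ge> 1 \<Longrightarrow> PCE n k = {f\<in>boolfuns n. card (Kset n f) = k} - Lset n"
proof (intro set_eqI iffI)
  fix f assume "f \<in> PCE n k"
  then show "f \<in> {f\<in>boolfuns n. card (Kset n f) = k} - Lset n"
    unfolding PCE_def Lset_def Kset_def by blast
next
  fix f assume k: "k \<ge> 1" and f: "f \<in> {f\<in>boolfuns n. card (Kset n f) = k} - Lset n"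
  then have "pos_canal n f" using card_pos by auto
  with f show "f \<in> PCE n k" unfolding PCE_def Lset_def Kset_def by blast
qed


lemma Lset_card: "f \<in> Lset n \<Longrightarrow> card (Kset n f) = 1"
proof -
  assume "f \<in> Lset n"
  then have f: "f \<in> boolfuns n" "pos_canal n f" "neg_canal n f" unfolding Lset_def by auto
  obtain i s where "i < n" "f = lit n i s" using L_char[OF f] by blast
  then show ?thesis using lit_props(2) by simp
qed

lemma PCE_ge2:
  fixes p :: real
  assumes "2 \<le> k"
  shows "Prb p n (PCE n k) = (\<Sum>r=k..n. real (r choose k) * (-1) ^ (r - k) * real (n choose r) * 2 ^ r
                             * (p ^ (2 ^ n - 2 ^ (n - r)) - p ^ (2 ^ n)))
       + (if n = k then p ^ (2 ^ n) else 0)"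
proof -
  have "PCE n k = {f\<in>boolfuns n. card (Kset n f) = k} - Lset n" using assms by (intro PCE_eq) simp
  also have "\<dots> = {f\<in>boolfuns n. card (Kset n f) = k}" using Lset_card assms by fastforce
  finally show ?thesis using main_count by simp
qed

lemma PCE_1:
  fixes p :: real
  assumes "1 < n"
  shows "Prb p n (PCE n 1) = 2 * real n * (p ^ (2 ^ (n - 1)) - p ^ (2 ^ n) - p ^ (2 ^ (n - 1)) * (1 - p) ^ (2 ^ (n - 1)))
          + (\<Sum>r=2..n. real r * (-1) ^ (r - 1) * real (n choose r) * 2 ^ r * (p ^ (2 ^ n - 2 ^ (n - r)) - p ^ (2 ^ n)))"
proof -
  define w where "w f = p ^ card {x\<in>cube n. f x} * (1 - p) ^ card {x\<in>cube n. \<not> f x}" for f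
  have sub: "Lset n \<subseteq> {f\<in>boolfuns n. card (Kset n f) = 1}" using Lset_card unfolding Lset_def by auto
  have fin: "finite {f\<in>boolfuns n. card (Kset n f) = 1}" using finite_boolfuns by simp
  have "Prb p n (PCE n 1) = Prb p n ({f\<in>boolfuns n. card (Kset n f) = 1} - Lset n)"
    by (simp add: PCE_eq)
  also have "\<dots> = Prb p n {f\<in>boolfuns n. card (Kset n f) = 1} - Prb p n (Lset n)"
    unfolding Prb_def by (rule sum_diff[OF fin sub])
  also have "Prb p n {f\<in>boolfuns n. card (Kset n f) = 1} =
      (\<Sum>r=1..n. real (r choose 1) * (-1) ^ (r - 1) * real (n choose r) * 2 ^ r
                             * (p ^ (2 ^ n - 2 ^ (n - r)) - p ^ (2 ^ n)))"
    using main_count[of p n 1] assms by simp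
  also have "\<dots> = real n * 2 * (p ^ (2 ^ n - 2 ^ (n - 1)) - p ^ (2 ^ n)) +
      (\<Sum>r=2..n. real r * (-1) ^ (r - 1) * real (n choose r) * 2 ^ r * (p ^ (2 ^ n - 2 ^ (n - r)) - p ^ (2 ^ n)))"
    using assms by (subst sum.atLeast_Suc_atMost) (auto simp: numeral_2_eq_2)
  also have "2 ^ n - 2 ^ (n - 1) = (2::nat) ^ (n - 1)"
  proof -
    have "(2::nat) ^ n = 2 * 2 ^ (n - 1)" using assms by (metis Suc_diff_1 less_trans zero_less_one power_Suc)
    then show ?thesis by simp
  qed
  also have "Prb p n (Lset n) = 2 * real n * (p ^ (2 ^ (n - 1)) * (1 - p) ^ (2 ^ (n - 1)))"
    using assms by (intro Prb_Lset) simp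
  finally show ?thesis by (simp add: algebra_simps)
qed

definition cmp :: "nat \<Rightarrow> (bool list \<Rightarrow> bool) \<Rightarrow> bool list \<Rightarrow> bool" where
  "cmp n f = (\<lambda>x. x \<in> cube n \<and> \<not> f x)"

lemma cmp_bf: "cmp n f \<in> boolfuns n"
  unfolding cmp_def boolfuns_def by auto

lemma cmp_cmp: "f \<in> boolfuns n \<Longrightarrow> cmp n (cmp n f) = f"
  unfolding cmp_def boolfuns_def by auto

lemma pos_cmp: "pos_canal_var n (cmp n f) i = neg_canal_var n f i"
  unfolding pos_canal_var_def neg_canal_var_def cmp_def by auto

lemma neg_cmp: "neg_canal_var n (cmp n f) i = pos_canal_var n f i"
  unfolding pos_canal_var_def neg_canal_var_def cmp_def by auto

lemma cmp_PCE: "f \<in> PCE n k \<Longrightarrow> cmp n f \<in> NCE n k"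
  unfolding PCE_def NCE_def pos_canal_def neg_canal_def by (simp add: pos_cmp neg_cmp cmp_bf)

lemma cmp_NCE: "f \<in> NCE n k \<Longrightarrow> cmp n f \<in> PCE n k"
  unfolding PCE_def NCE_def pos_canal_def neg_canal_def by (simp add: pos_cmp neg_cmp cmp_bf)

lemma NCE_image: "NCE n k = cmp n ` PCE n k"
proof (intro set_eqI iffI)
  fix g assume g: "g \<in> NCE n k"
  then have "g \<in> boolfuns n" unfolding NCE_def by auto
  then have "g = cmp n (cmp n g)" by (simp add: cmp_cmp)
  moreover have "cmp n g \<in> PCE n k" using g by (rule cmp_NCE)
  ultimately show "g \<in> cmp n ` PCE n k" by (rule image_eqI)
next
  fix g assume "g \<in> cmp n ` PCE n k"
  then obtain f where "f \<in> PCE n k" "g = cmp n f" by (rule imageE)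
  then show "g \<in> NCE n k" using cmp_PCE by simp
qed

lemma Prb_NCE:
  fixes p :: real
  shows "Prb p n (NCE n k) = Prb (1 - p) n (PCE n k)"
proof -
  have "inj_on (cmp n) (PCE n k)"
  proof (rule inj_onI)
    fix f g assume "f \<in> PCE n k" "g \<in> PCE n k" "cmp n f = cmp n g"
    then have "f \<in> boolfuns n" "g \<in> boolfuns n" "cmp n (cmp n f) = cmp n (cmp n g)" unfolding PCE_def by auto
    then show "f = g" by (simp add: cmp_cmp)
  qed
  then have "Prb p n (NCE n k) = (\<Sum>f\<in>PCE n k. p ^ card {x\<in>cube n. cmp n f x} * (1 - p) ^ card {x\<in>cube n. \<not> cmp n f x})"
    unfolding NCE_image Prb_def by (simp add: sum.reindex)
  also have "\<dots> = Prb (1 - p) n (PCE n k)"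
    unfolding Prb_def
  proof (rule sum.cong[OF refl])
    fix f
    have e1: "{x\<in>cube n. cmp n f x} = {x\<in>cube n. \<not> f x}" unfolding cmp_def by auto
    have e2: "{x\<in>cube n. \<not> cmp n f x} = {x\<in>cube n. f x}" unfolding cmp_def by auto
    show "p ^ card {x\<in>cube n. cmp n f x} * (1 - p) ^ card {x\<in>cube n. \<not> cmp n f x}
        = (1 - p) ^ card {x\<in>cube n. f x} * (1 - (1 - p)) ^ card {x\<in>cube n. \<not> f x}"
      unfolding e1 e2 by simp
  qed
  finally show ?thesis .
qed

theorem mainTheorem7:
  fixes n :: nat and p :: real
  assumes "n \<ge> 1" and "0 \<le> p" and "p \<le> 1"
  shows
   "(\<forall>k. 1 < k \<and> k < n \<longrightarrow>
       Prb p n (PCE n k) = (\<Sum>r=k..n. real (r choose k) * (-1) ^ (r - k) * real (n choose r) * 2 ^ r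
                             * (p ^ (2 ^ n - 2 ^ (n - r)) - p ^ (2 ^ n)))
     \<and> Prb p n (NCE n k) = (\<Sum>r=k..n. real (r choose k) * (-1) ^ (r - k) * real (n choose r) * 2 ^ r
                             * ((1 - p) ^ (2 ^ n - 2 ^ (n - r)) - (1 - p) ^ (2 ^ n))))
    \<and> (n > 1 \<longrightarrow>
       Prb p n (PCE n n) = 2 ^ n * (p ^ (2 ^ n - 1) - p ^ (2 ^ n)) + p ^ (2 ^ n)
     \<and> Prb p n (NCE n n) = 2 ^ n * ((1 - p) ^ (2 ^ n - 1) - (1 - p) ^ (2 ^ n)) + (1 - p) ^ (2 ^ n))
    \<and> (1 < n \<longrightarrow>
       Prb p n (PCE n 1) = 2 * real n * (p ^ (2 ^ (n - 1)) - p ^ (2 ^ n) - p ^ (2 ^ (n - 1)) * (1 - p) ^ (2 ^ (n - 1)))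
          + (\<Sum>r=2..n. real r * (-1) ^ (r - 1) * real (n choose r) * 2 ^ r * (p ^ (2 ^ n - 2 ^ (n - r)) - p ^ (2 ^ n)))
     \<and> Prb p n (NCE n 1) = 2 * real n * ((1 - p) ^ (2 ^ (n - 1)) - (1 - p) ^ (2 ^ n) - p ^ (2 ^ (n - 1)) * (1 - p) ^ (2 ^ (n - 1)))
          + (\<Sum>r=2..n. real r * (-1) ^ (r - 1) * real (n choose r) * 2 ^ r * ((1 - p) ^ (2 ^ n - 2 ^ (n - r)) - (1 - p) ^ (2 ^ n))))"
  proof (intro conjI allI impI)
  fix k assume k: "1 < k \<and> k < n"
  show "Prb p n (PCE n k) = (\<Sum>r=k..n. real (r choose k) * (-1) ^ (r - k) * real (n choose r) * 2 ^ r
                             * (p ^ (2 ^ n - 2 ^ (n - r)) - p ^ (2 ^ n)))"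
    using PCE_ge2[of k p n] k by simp
  show "Prb p n (NCE n k) = (\<Sum>r=k..n. real (r choose k) * (-1) ^ (r - k) * real (n choose r) * 2 ^ r
                             * ((1 - p) ^ (2 ^ n - 2 ^ (n - r)) - (1 - p) ^ (2 ^ n)))"
    using PCE_ge2[of k "1 - p" n] k by (simp add: Prb_NCE)
next
  assume n: "n > 1"
  show "Prb p n (PCE n n) = 2 ^ n * (p ^ (2 ^ n - 1) - p ^ (2 ^ n)) + p ^ (2 ^ n)"
    using PCE_ge2[of n p n] n by simp
  show "Prb p n (NCE n n) = 2 ^ n * ((1 - p) ^ (2 ^ n - 1) - (1 - p) ^ (2 ^ n)) + (1 - p) ^ (2 ^ n)"
    using PCE_ge2[of n "1 - p" n] n by (simp add: Prb_NCE)
next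
  assume n: "1 < n"
  show "Prb p n (PCE n 1) = 2 * real n * (p ^ (2 ^ (n - 1)) - p ^ (2 ^ n) - p ^ (2 ^ (n - 1)) * (1 - p) ^ (2 ^ (n - 1)))
          + (\<Sum>r=2..n. real r * (-1) ^ (r - 1) * real (n choose r) * 2 ^ r * (p ^ (2 ^ n - 2 ^ (n - r)) - p ^ (2 ^ n)))"
    using PCE_1[OF n] .
  show "Prb p n (NCE n 1) = 2 * real n * ((1 - p) ^ (2 ^ (n - 1)) - (1 - p) ^ (2 ^ n) - p ^ (2 ^ (n - 1)) * (1 - p) ^ (2 ^ (n - 1)))
          + (\<Sum>r=2..n. real r * (-1) ^ (r - 1) * real (n choose r) * 2 ^ r * ((1 - p) ^ (2 ^ n - 2 ^ (n - r)) - (1 - p) ^ (2 ^ n)))"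
    using PCE_1[OF n, of "1 - p"] by (simp add: Prb_NCE mult.commute)
qed


end
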